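(* Let $x,y\in\mathbf S^3$ be distinct, and let $w\in\mathbb{C}^3$ be any representative of $\pi_x(y)$. Then \[\frac{\langle w,w\rangle}{\|w\|^2}=-\frac{|\langle x,y\rangle|^2}{\|x\wedge y\|^2},\] for any representatives $x,y\in\mathbb{C}^3$.
   Context: On $\mathbb{C}^3$: $u\cdot v=\sum u_i\bar v_i$, $\|u\|=\sqrt{u\cdot u}$, $\langle u,v\rangle=u_0\bar v_0-u_1\bar v_1-u_2\bar v_2$, $\|u\wedge v\|^2=\|u\|^2\|v\|^2-|u\cdot v|^2$. $\mathbf S^3=\{u\in\mathbb P^2_{\mathbb C}:\langle u,u\rangle=0\}$. For $w$, $w^\perp=\{u:\langle u,w\rangle=0\}$ (a projective line). For $x\in\mathbf S^3$ and $y\in\mathbf S^3\setminus\{x\}$, $\pi_x(y)$ is the unique intersection point of the projective lines $x^\perp$ and $y^\perp$. *)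

theory Defs
  imports "HOL-Analysis.Analysis"
begin

definition hdot :: "complex^3 \<Rightarrow> complex^3 \<Rightarrow> complex" where
  "hdot u v = (\<Sum>i\<in>UNIV. u $ i * cnj (v $ i))"

definition herm :: "complex^3 \<Rightarrow> complex^3 \<Rightarrow> complex" where
  "herm u v = u $ 0 * cnj (v $ 0) - u $ 1 * cnj (v $ 1) - u $ 2 * cnj (v $ 2)"

definition wedge_norm_sq :: "complex^3 \<Rightarrow> complex^3 \<Rightarrow> real" where
  "wedge_norm_sq u v = (norm u)\<^sup>2 * (norm v)\<^sup>2 - (cmod (hdot u v))\<^sup>2"

definition proj_eq :: "complex^3 \<Rightarrow> complex^3 \<Rightarrow> bool" where
  "proj_eq u v \<longleftrightarrow> (\<exists>c. c \<noteq> 0 \<and> u = c *s v)"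

text \<open>Representatives of points of \<open>S\<^sup>3\<close>.\<close>
definition S3_reps :: "(complex^3) set" where
  "S3_reps = {u. u \<noteq> 0 \<and> herm u u = 0}"

text \<open>Representatives of points of the projective line \<open>w\<^sup>\<perp>\<close>.\<close>
definition perp_reps :: "complex^3 \<Rightarrow> (complex^3) set" where
  "perp_reps w = {u. u \<noteq> 0 \<and> herm u w = 0}"

text \<open>\<open>w\<close> represents \<open>\<pi>_x(y)\<close>: a representative of a (the unique) intersection point of
  the projective lines \<open>x\<^sup>\<perp>\<close> and \<open>y\<^sup>\<perp>\<close>.\<close>
definition pi_rep :: "complex^3 \<Rightarrow> complex^3 \<Rightarrow> complex^3 \<Rightarrow> bool" where
  "pi_rep x y w \<longleftrightarrow> w \<in> perp_reps x \<inter> perp_reps y"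

end

theory Submission imports Defs begin
lemma core:
 fixes a0 a1 a2 b0 b1 b2 c0 c1 c2 A0 A1 A2 B0 B1 B2 C0 C1 C2 :: complex
 assumes ha: "a0*A0 - a1*A1 - a2*A2 = 0" and hb: "b0*B0 - b1*B1 - b2*B2 = 0"
  and p1: "C0*a0 - C1*a1 - C2*a2 = 0" and p2: "C0*b0 - C1*b1 - C2*b2 = 0"
  and q1: "c0*A0 - c1*A1 - c2*A2 = 0" and q2: "c0*B0 - c1*B1 - c2*B2 = 0"
 shows "(c0*C0 - c1*C1 - c2*C2) * ((a1*b2 - a2*b1)*(A1*B2 - A2*B1) + (a2*b0 - a0*b2)*(A2*B0 - A0*B2) + (a0*b1 - a1*b0)*(A0*B1 - A1*B0))
   = - ((a0*B0 - a1*B1 - a2*B2)*(A0*b0 - A1*b1 - A2*b2)) * (c0*C0+c1*C1+c2*C2)"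
proof -
  define z0 where "z0 = a1*b2 - a2*b1"
  define z1 where "z1 = a2*b0 - a0*b2"
  define z2 where "z2 = a0*b1 - a1*b0"
  define Z0 where "Z0 = A1*B2 - A2*B1"
  define Z1 where "Z1 = A2*B0 - A0*B2"
  define Z2 where "Z2 = A0*B1 - A1*B0"
  have e2: "C0*z1 + C1*z0 = 0" unfolding z0_def z1_def using p1 p2 by algebra
  have e0: "C2*z1 - C1*z2 = 0" unfolding z2_def z1_def using p1 p2 by algebra
  have e1: "C2*z0 + C0*z2 = 0" unfolding z0_def z2_def using p1 p2 by algebra
  have f2: "c0*Z1 + c1*Z0 = 0" unfolding Z0_def Z1_def using q1 q2 by algebra
  have f0: "c2*Z1 - c1*Z2 = 0" unfolding Z2_def Z1_def using q1 q2 by algebra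
  have f1: "c2*Z0 + c0*Z2 = 0" unfolding Z0_def Z2_def using q1 q2 by algebra
  have J: "z0*Z0 - z1*Z1 - z2*Z2 = - ((a0*B0 - a1*B1 - a2*B2)*(A0*b0 - A1*b1 - A2*b2))"
    unfolding z0_def z1_def z2_def Z0_def Z1_def Z2_def using ha hb by algebra
  have K: "(c0*C0 - c1*C1 - c2*C2) * (z0*Z0 + z1*Z1 + z2*Z2) = (z0*Z0 - z1*Z1 - z2*Z2) * (c0*C0+c1*C1+c2*C2)"
    using e0 e1 e2 f0 f1 f2 by algebra
  show ?thesis using K J unfolding z0_def z1_def z2_def Z0_def Z1_def Z2_def by simp
qed

lemma three_eq_zero: "(3::3) = 0" by simp

lemma sum3': "sum f (UNIV::3 set) = f 0 + f 1 + f 2"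
  using sum_3[of f] three_eq_zero by (simp add: ac_simps)

lemma normsq3: "complex_of_real ((norm (x::complex^3))\<^sup>2) = x$0 * cnj (x$0) + x$1 * cnj (x$1) + x$2 * cnj (x$2)"
proof -
  have "(norm x)\<^sup>2 = (\<Sum>i\<in>UNIV. (norm (x$i))\<^sup>2)"
    unfolding norm_vec_def L2_set_def by (simp add: sum_nonneg)
  then have "(norm x)\<^sup>2 = (norm (x$0))\<^sup>2 + (norm (x$1))\<^sup>2 + (norm (x$2))\<^sup>2" by (simp add: sum3')
  then have "complex_of_real ((norm x)\<^sup>2) = complex_of_real ((norm (x$0))\<^sup>2 + (norm (x$1))\<^sup>2 + (norm (x$2))\<^sup>2)" by simp
  then show ?thesis unfolding of_real_add complex_norm_square .
qed

lemma forall3': "(\<forall>i::3. P i) \<longleftrightarrow> P 0 \<and> P 1 \<and> P 2"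
  using forall_3[of P] three_eq_zero by auto

lemma vec3_eq: "(u::complex^3) = v \<longleftrightarrow> u$0 = v$0 \<and> u$1 = v$1 \<and> u$2 = v$2"
  unfolding vec_eq_iff forall3' ..

lemma propor1:
  fixes a0 a1 a2 b0 b1 b2 :: complex
  assumes "a1*b0 = a0*b1" "a2*b0 = a0*b2"
    and "\<not> (a0 = 0 \<and> a1 = 0 \<and> a2 = 0)" "b0 \<noteq> 0"
  shows "\<exists>c. c \<noteq> 0 \<and> a0 = c*b0 \<and> a1 = c*b1 \<and> a2 = c*b2"
proof (intro exI conjI)
  show "a0 = a0/b0*b0" using assms(4) by simp
  show "a1 = a0/b0*b1" using assms(1,4) by (simp add: divide_simps mult.commute)
  show "a2 = a0/b0*b2" using assms(2,4) by (simp add: divide_simps mult.commute)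
  show "a0/b0 \<noteq> 0"
  proof
    assume "a0/b0 = 0"
    then have "a0 = 0" using assms(4) by simp
    then show False using assms by auto
  qed
qed

lemma propor:
  fixes a0 a1 a2 b0 b1 b2 :: complex
  assumes "a1*b2 - a2*b1 = 0" "a2*b0 - a0*b2 = 0" "a0*b1 - a1*b0 = 0"
    and "\<not> (a0 = 0 \<and> a1 = 0 \<and> a2 = 0)" "\<not> (b0 = 0 \<and> b1 = 0 \<and> b2 = 0)"
  shows "\<exists>c. c \<noteq> 0 \<and> a0 = c*b0 \<and> a1 = c*b1 \<and> a2 = c*b2"
proof -
  consider "b0 \<noteq> 0" | "b1 \<noteq> 0" | "b2 \<noteq> 0" using assms(5) by blast
  then show ?thesis
  proof cases
    case 1
    show ?thesis by (rule propor1) (use 1 assms in auto)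
  next
    case 2
    have "\<exists>c. c \<noteq> 0 \<and> a1 = c*b1 \<and> a0 = c*b0 \<and> a2 = c*b2"
      by (rule propor1) (use 2 assms in auto)
    then show ?thesis by blast
  next
    case 3
    have "\<exists>c. c \<noteq> 0 \<and> a2 = c*b2 \<and> a1 = c*b1 \<and> a0 = c*b0"
      by (rule propor1) (use 3 assms in auto)
    then show ?thesis by blast
  qed
qed

theorem lemma5p7:
  fixes x y w :: "complex^3"
  assumes "x \<in> S3_reps" and "y \<in> S3_reps" and "\<not> proj_eq x y"
    and "pi_rep x y w"
  shows "herm w w / complex_of_real ((norm w)\<^sup>2)
         = - complex_of_real ((cmod (herm x y))\<^sup>2 / wedge_norm_sq x y)"
proof -
  define a0 where "a0 = x$0" define a1 where "a1 = x$1" define a2 where "a2 = x$2"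
  define b0 where "b0 = y$0" define b1 where "b1 = y$1" define b2 where "b2 = y$2"
  define c0 where "c0 = w$0" define c1 where "c1 = w$1" define c2 where "c2 = w$2"
  have x0: "x \<noteq> 0" "herm x x = 0" using assms(1) by (auto simp: S3_reps_def)
  have y0: "y \<noteq> 0" "herm y y = 0" using assms(2) by (auto simp: S3_reps_def)
  have w0: "w \<noteq> 0" "herm w x = 0" "herm w y = 0" using assms(4) by (auto simp: pi_rep_def perp_reps_def)
  have ha: "a0*cnj a0 - a1*cnj a1 - a2*cnj a2 = 0" using x0 by (simp add: herm_def a0_def a1_def a2_def)
  have hb: "b0*cnj b0 - b1*cnj b1 - b2*cnj b2 = 0" using y0 by (simp add: herm_def b0_def b1_def b2_def)
  have q1: "c0*cnj a0 - c1*cnj a1 - c2*cnj a2 = 0" using w0 by (simp add: herm_def a0_def a1_def a2_def c0_def c1_def c2_def)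
  have q2: "c0*cnj b0 - c1*cnj b1 - c2*cnj b2 = 0" using w0 by (simp add: herm_def b0_def b1_def b2_def c0_def c1_def c2_def)
  have p1: "cnj c0*a0 - cnj c1*a1 - cnj c2*a2 = 0" using arg_cong[OF q1, of cnj] by simp
  have p2: "cnj c0*b0 - cnj c1*b1 - cnj c2*b2 = 0" using arg_cong[OF q2, of cnj] by simp
  have K: "(c0*cnj c0 - c1*cnj c1 - c2*cnj c2) * ((a1*b2 - a2*b1)*(cnj a1*cnj b2 - cnj a2*cnj b1) + (a2*b0 - a0*b2)*(cnj a2*cnj b0 - cnj a0*cnj b2) + (a0*b1 - a1*b0)*(cnj a0*cnj b1 - cnj a1*cnj b0))
   = - ((a0*cnj b0 - a1*cnj b1 - a2*cnj b2)*(cnj a0*b0 - cnj a1*b1 - cnj a2*b2)) * (c0*cnj c0+c1*cnj c1+c2*cnj c2)"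
    by (rule core[OF ha hb p1 p2 q1 q2])
  have hd: "hdot x y = a0*cnj b0 + a1*cnj b1 + a2*cnj b2"
    by (simp add: hdot_def sum3' a0_def a1_def a2_def b0_def b1_def b2_def)
  have Wc: "complex_of_real (wedge_norm_sq x y) = (a1*b2 - a2*b1)*cnj (a1*b2 - a2*b1) + (a2*b0 - a0*b2)*cnj (a2*b0 - a0*b2) + (a0*b1 - a1*b0)*cnj (a0*b1 - a1*b0)"
  proof -
    have "complex_of_real (wedge_norm_sq x y) = complex_of_real ((norm x)\<^sup>2) * complex_of_real ((norm y)\<^sup>2) - complex_of_real ((cmod (hdot x y))\<^sup>2)"
      by (simp add: wedge_norm_sq_def)
    also have "\<dots> = (a0*cnj a0 + a1*cnj a1 + a2*cnj a2) * (b0*cnj b0 + b1*cnj b1 + b2*cnj b2) - hdot x y * cnj (hdot x y)"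
      unfolding normsq3 complex_norm_square a0_def a1_def a2_def b0_def b1_def b2_def ..
    also have "\<dots> = (a1*b2 - a2*b1)*cnj (a1*b2 - a2*b1) + (a2*b0 - a0*b2)*cnj (a2*b0 - a0*b2) + (a0*b1 - a1*b0)*cnj (a0*b1 - a1*b0)"
      unfolding hd complex_cnj_add complex_cnj_mult complex_cnj_diff complex_cnj_cnj by algebra
    finally show ?thesis .
  qed
  define z0 where "z0 = a1*b2 - a2*b1"
  define z1 where "z1 = a2*b0 - a0*b2"
  define z2 where "z2 = a0*b1 - a1*b0"
  have Wr: "wedge_norm_sq x y = (cmod z0)\<^sup>2 + (cmod z1)\<^sup>2 + (cmod z2)\<^sup>2"
  proof -
    have "complex_of_real (wedge_norm_sq x y) = complex_of_real ((cmod z0)\<^sup>2 + (cmod z1)\<^sup>2 + (cmod z2)\<^sup>2)"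
      unfolding Wc of_real_add complex_norm_square z0_def z1_def z2_def ..
    then show ?thesis using of_real_eq_iff by blast
  qed
  have Wne: "wedge_norm_sq x y \<noteq> 0"
  proof
    assume "wedge_norm_sq x y = 0"
    then have "z0 = 0" "z1 = 0" "z2 = 0" unfolding Wr
      using zero_le_power2[of "cmod z0"] zero_le_power2[of "cmod z1"] zero_le_power2[of "cmod z2"]
      by (simp_all add: add_nonneg_eq_0_iff)
    moreover have "\<not> (a0 = 0 \<and> a1 = 0 \<and> a2 = 0)" using x0(1) by (auto simp: vec3_eq a0_def a1_def a2_def)
    moreover have "\<not> (b0 = 0 \<and> b1 = 0 \<and> b2 = 0)" using y0(1) by (auto simp: vec3_eq b0_def b1_def b2_def)
    ultimately obtain c where "c \<noteq> 0 \<and> a0 = c*b0 \<and> a1 = c*b1 \<and> a2 = c*b2"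
      using propor unfolding z0_def z1_def z2_def by blast
    then have "proj_eq x y" unfolding proj_eq_def
      by (auto simp: vec3_eq a0_def a1_def a2_def b0_def b1_def b2_def)
    then show False using assms(3) by blast
  qed
  have Nne: "norm w \<noteq> 0" using w0(1) by simp
  have hw: "herm w w = c0*cnj c0 - c1*cnj c1 - c2*cnj c2" by (simp add: herm_def c0_def c1_def c2_def)
  have hxy: "complex_of_real ((cmod (herm x y))\<^sup>2) = (a0*cnj b0 - a1*cnj b1 - a2*cnj b2)*(cnj a0*b0 - cnj a1*b1 - cnj a2*b2)"
    unfolding complex_norm_square by (simp add: herm_def a0_def a1_def a2_def b0_def b1_def b2_def)
  have nw: "complex_of_real ((norm w)\<^sup>2) = c0*cnj c0+c1*cnj c1+c2*cnj c2"
    unfolding normsq3 c0_def c1_def c2_def ..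
  have Wc': "complex_of_real (wedge_norm_sq x y) = (a1*b2 - a2*b1)*(cnj a1*cnj b2 - cnj a2*cnj b1) + (a2*b0 - a0*b2)*(cnj a2*cnj b0 - cnj a0*cnj b2) + (a0*b1 - a1*b0)*(cnj a0*cnj b1 - cnj a1*cnj b0)"
    unfolding Wc by simp
  have Kf: "herm w w * complex_of_real (wedge_norm_sq x y) = - complex_of_real ((cmod (herm x y))\<^sup>2) * complex_of_real ((norm w)\<^sup>2)"
    unfolding hw Wc' hxy nw by (rule K)
  have n1: "complex_of_real ((norm w)\<^sup>2) \<noteq> 0" using Nne by simp
  have n2: "complex_of_real (wedge_norm_sq x y) \<noteq> 0" using Wne by simp
  show ?thesis unfolding of_real_divide minus_divide_left frac_eq_eq[OF n1 n2] using Kf by simp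
qed
end
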